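(* Let $n,q$ be positive integers and let $f_{n,q}:\mathbb{C}^3\to\mathbb{C}$ be the polynomial $f_{n,q}(x,y,z)=x-3x^{2n+1}y^{2q}+2x^{3n+1}y^{3q}+yz$. Then there exists a polynomial automorphism $P=(P_1,P_2,P_3):\mathbb{C}^3\to\mathbb{C}^3$ (a polynomial map with polynomial inverse) such that $f_{n,q}=P_1$. *)

theory Defs
  imports Complex_Main
begin

text \<open>A polynomial function on C^3: a finite linear combination of monomials.
  Over the infinite field C polynomial functions correspond exactly to polynomials.\<close>
definition poly3_fun :: "(complex \<Rightarrow> complex \<Rightarrow> complex \<Rightarrow> complex) \<Rightarrow> bool" where
  "poly3_fun f \<longleftrightarrow> (\<exists>S c. finite S \<and>
     (\<forall>x y z. f x y z = (\<Sum>(i,j,k)\<in>S. c (i,j,k) * x ^ i * y ^ j * z ^ k)))"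

definition poly_automorphism3 ::
  "(complex \<Rightarrow> complex \<Rightarrow> complex \<Rightarrow> complex) \<Rightarrow>
   (complex \<Rightarrow> complex \<Rightarrow> complex \<Rightarrow> complex) \<Rightarrow>
   (complex \<Rightarrow> complex \<Rightarrow> complex \<Rightarrow> complex) \<Rightarrow> bool" where
  "poly_automorphism3 P1 P2 P3 \<longleftrightarrow>
     poly3_fun P1 \<and> poly3_fun P2 \<and> poly3_fun P3 \<and>
     (\<exists>Q1 Q2 Q3. poly3_fun Q1 \<and> poly3_fun Q2 \<and> poly3_fun Q3 \<and>
       (\<forall>x y z. Q1 (P1 x y z) (P2 x y z) (P3 x y z) = x \<and>
                Q2 (P1 x y z) (P2 x y z) (P3 x y z) = y \<and>
                Q3 (P1 x y z) (P2 x y z) (P3 x y z) = z) \<and>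
       (\<forall>x y z. P1 (Q1 x y z) (Q2 x y z) (Q3 x y z) = x \<and>
                P2 (Q1 x y z) (Q2 x y z) (Q3 x y z) = y \<and>
                P3 (Q1 x y z) (Q2 x y z) (Q3 x y z) = z))"

end

theory Submission imports Defs begin

definition mon :: "nat \<times> nat \<times> nat \<Rightarrow> complex \<Rightarrow> complex \<Rightarrow> complex \<Rightarrow> complex" where
  "mon s x y z = (case s of (i,j,k) \<Rightarrow> x^i * y^j * z^k)"

lemma poly3_alt: "poly3_fun f \<longleftrightarrow> (\<exists>S c. finite S \<and> (\<forall>x y z. f x y z = (\<Sum>s\<in>S. c s * mon s x y z)))"
proof -
  have "\<And>c x y z s. (case s of (i,j,k) \<Rightarrow> c (i,j,k) * x ^ i * y ^ j * z ^ k) = c s * mon s x y z"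
    by (auto simp: mon_def split: prod.splits)
  then show ?thesis unfolding poly3_fun_def by simp
qed

lemma poly3_mon: "poly3_fun (\<lambda>x y z. mon s x y z)"
  unfolding poly3_alt by (rule exI[of _ "{s}"], rule exI[of _ "\<lambda>_. 1"]) simp

lemma poly3_const: "poly3_fun (\<lambda>x y z. a)"
  unfolding poly3_alt by (rule exI[of _ "{(0,0,0)}"], rule exI[of _ "\<lambda>_. a"]) (simp add: mon_def)

lemma poly3_x: "poly3_fun (\<lambda>x y z. x)"
  using poly3_mon[of "(1,0,0)"] by (simp add: mon_def)
lemma poly3_y: "poly3_fun (\<lambda>x y z. y)"
  using poly3_mon[of "(0,1,0)"] by (simp add: mon_def)
lemma poly3_z: "poly3_fun (\<lambda>x y z. z)"
  using poly3_mon[of "(0,0,1)"] by (simp add: mon_def)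

lemma poly3_add:
  assumes "poly3_fun f" "poly3_fun g"
  shows "poly3_fun (\<lambda>x y z. f x y z + g x y z)"
proof -
  obtain S c where S: "finite S" "\<And>x y z. f x y z = (\<Sum>s\<in>S. c s * mon s x y z)"
    using assms(1) unfolding poly3_alt by blast
  obtain T d where T: "finite T" "\<And>x y z. g x y z = (\<Sum>s\<in>T. d s * mon s x y z)"
    using assms(2) unfolding poly3_alt by blast
  define e where "e s = (if s \<in> S then c s else 0) + (if s \<in> T then d s else 0)" for s
  have "f x y z + g x y z = (\<Sum>s\<in>S\<union>T. e s * mon s x y z)" for x y z
  proof -
    have 1: "(\<Sum>s\<in>S\<union>T. (if s \<in> S then c s else 0) * mon s x y z) = (\<Sum>s\<in>S. c s * mon s x y z)"
      by (rule sum.mono_neutral_cong_right) (use S T in auto)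
    have 2: "(\<Sum>s\<in>S\<union>T. (if s \<in> T then d s else 0) * mon s x y z) = (\<Sum>s\<in>T. d s * mon s x y z)"
      by (rule sum.mono_neutral_cong_right) (use S T in auto)
    show ?thesis unfolding e_def distrib_right sum.distrib 1 2 S T ..
  qed
  then show ?thesis unfolding poly3_alt using S T by blast
qed

lemma sum_group_mon: "finite A \<Longrightarrow> (\<Sum>p\<in>A. h p * mon (\<phi> p) x y z) = (\<Sum>m\<in>\<phi>`A. (\<Sum>p\<in>{p\<in>A. \<phi> p = m}. h p) * mon m x y z)"
proof -
  assume A: "finite A"
  have "(\<Sum>p\<in>A. h p * mon (\<phi> p) x y z) = (\<Sum>m\<in>\<phi>`A. (\<Sum>p\<in>{p\<in>A. \<phi> p = m}. h p * mon (\<phi> p) x y z))"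
    by (rule sum.group[symmetric]) (use A in auto)
  also have "\<dots> = (\<Sum>m\<in>\<phi>`A. (\<Sum>p\<in>{p\<in>A. \<phi> p = m}. h p) * mon m x y z)"
    unfolding sum_distrib_right by (rule sum.cong[OF refl], rule sum.cong[OF refl]) auto
  finally show ?thesis .
qed
lemma aux_mult: assumes mm: "\<And>p x y z. mon (\<phi> p) x y z = mon (fst p) x y z * mon (snd p) x y z"
  shows "(\<Sum>s\<in>S. c s * mon s x y z) * (\<Sum>t\<in>T. d t * mon t x y z) = (\<Sum>p\<in>S\<times>T. (c (fst p) * d (snd p)) * mon (\<phi> p) x y z)"
proof -
  have "(\<Sum>s\<in>S. c s * mon s x y z) * (\<Sum>t\<in>T. d t * mon t x y z) = (\<Sum>s\<in>S. \<Sum>t\<in>T. (c s * mon s x y z) * (d t * mon t x y z))"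
    by (rule sum_product)
  also have "\<dots> = (\<Sum>p\<in>S\<times>T. (c (fst p) * mon (fst p) x y z) * (d (snd p) * mon (snd p) x y z))"
    unfolding sum.cartesian_product by (rule sum.cong[OF refl]) (clarify, simp)
  also have "\<dots> = (\<Sum>p\<in>S\<times>T. (c (fst p) * d (snd p)) * mon (\<phi> p) x y z)"
    unfolding mm by (rule sum.cong[OF refl]) (simp add: mult_ac)
  finally show ?thesis .
qed

definition addm :: "(nat\<times>nat\<times>nat)\<times>(nat\<times>nat\<times>nat) \<Rightarrow> nat\<times>nat\<times>nat" where
  "addm p = (case p of ((i,j,k),(i',j',k')) \<Rightarrow> (i+i',j+j',k+k'))"

lemma mon_addm: "mon (addm p) x y z = mon (fst p) x y z * mon (snd p) x y z"
  by (auto simp: mon_def addm_def power_add split: prod.splits)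

lemma poly3_mult:
  assumes "poly3_fun f" "poly3_fun g"
  shows "poly3_fun (\<lambda>x y z. f x y z * g x y z)"
proof -
  obtain S c where S: "finite S" "\<And>x y z. f x y z = (\<Sum>s\<in>S. c s * mon s x y z)"
    using assms(1) unfolding poly3_alt by blast
  obtain T d where T: "finite T" "\<And>x y z. g x y z = (\<Sum>s\<in>T. d s * mon s x y z)"
    using assms(2) unfolding poly3_alt by blast
  define e where "e m = (\<Sum>p\<in>{p\<in>S\<times>T. addm p = m}. c (fst p) * d (snd p))" for m
  have eq: "f x y z * g x y z = (\<Sum>m\<in>addm`(S\<times>T). e m * mon m x y z)" for x y z
    unfolding S T aux_mult[of addm, OF mon_addm] e_def
    by (rule sum_group_mon) (use S T in simp)
  show ?thesis unfolding poly3_alt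
    by (rule exI[of _ "addm`(S\<times>T)"], rule exI[of _ e]) (use S T eq in simp)
qed
lemma poly3_pow:
  assumes "poly3_fun f"
  shows "poly3_fun (\<lambda>x y z. f x y z ^ m)"
  by (induction m) (simp_all add: poly3_const poly3_mult assms)

lemma poly3_diff:
  assumes "poly3_fun f" "poly3_fun g"
  shows "poly3_fun (\<lambda>x y z. f x y z - g x y z)"
proof -
  have "poly3_fun (\<lambda>x y z. f x y z + (-1) * g x y z)"
    by (intro poly3_add poly3_mult poly3_const assms)
  then show ?thesis by simp
qed

lemma poly3_comp:
  assumes "poly3_fun f" "poly3_fun A" "poly3_fun B" "poly3_fun C"
  shows "poly3_fun (\<lambda>x y z. f (A x y z) (B x y z) (C x y z))"
proof -
  obtain S c where S: "finite S" "\<And>x y z. f x y z = (\<Sum>s\<in>S. c s * mon s x y z)"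
    using assms(1) unfolding poly3_alt by blast
  have "poly3_fun (\<lambda>x y z. (\<Sum>s\<in>S'. c s * mon s (A x y z) (B x y z) (C x y z)))" if "finite S'" for S'
    using that
  proof (induction S' rule: finite_induct)
    case empty then show ?case using poly3_const[of 0] by simp
  next
    case (insert s F)
    obtain i j k where s: "s = (i,j,k)" by (cases s) auto
    have "poly3_fun (\<lambda>x y z. c s * mon s (A x y z) (B x y z) (C x y z))"
      unfolding s mon_def by (simp, intro poly3_mult poly3_pow poly3_const assms)
    then show ?case using insert by (simp add: poly3_add)
  qed
  then show ?thesis using S by simp
qed

lemma key_eq:
  fixes x y z :: complex and n q :: nat
  assumes "q > 0"
  shows "x - 3 * x ^ (2*n+1) * y ^ (2*q) + 2 * x ^ (3*n+1) * y ^ (3*q) + y * z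
       = x + y * (z + y ^ (2*q-1) * x ^ (2*n+1) * (2 * x^n * y^q - 3))"
proof -
  define Y where "Y = y ^ (2*q-1)"
  define X where "X = x ^ (2*n+1)"
  have "2*q = Suc (2*q-1)" using assms by simp
  then have e1: "y ^ (2*q) = y * Y" unfolding Y_def by (metis power_Suc)
  have e2: "y ^ (3*q) = y * Y * y^q" unfolding e1[symmetric]
    by (subst power_add[symmetric]) simp
  have e3: "x ^ (3*n+1) = X * x^n" unfolding X_def
    by (subst power_add[symmetric]) simp
  show ?thesis unfolding e1 e2 e3 X_def[symmetric] Y_def[symmetric]
    by (simp add: algebra_simps)
qed

theorem mainTheorem1:
  fixes n q :: nat
  assumes "n > 0" and "q > 0"
  shows "\<exists>P2 P3. poly_automorphism3
           (\<lambda>x y z. x - 3 * x ^ (2*n+1) * y ^ (2*q) + 2 * x ^ (3*n+1) * y ^ (3*q) + y * z)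
           P2 P3"
proof -
  define F where "F = (\<lambda>x y z::complex. x - 3 * x ^ (2*n+1) * y ^ (2*q) + 2 * x ^ (3*n+1) * y ^ (3*q) + y * z)"
  define G :: "complex \<Rightarrow> complex \<Rightarrow> complex" where
    "G = (\<lambda>x y. y ^ (2*q-1) * x ^ (2*n+1) * (2 * x^n * y^q - 3))"
  define P3 where "P3 = (\<lambda>x y z. z + G x y)"
  define Q1 where "Q1 = (\<lambda>a b c::complex. a - b * c)"
  define Q3 where "Q3 = (\<lambda>a b c. c - G (a - b*c) b)"
  have key: "F x y z = x + y * P3 x y z" for x y z
    unfolding F_def P3_def G_def using key_eq[OF assms(2)] by simp
  have px: "poly3_fun (\<lambda>x y z. x)" by (rule poly3_x)
  have py: "poly3_fun (\<lambda>x y z. y)" by (rule poly3_y)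
  have pz: "poly3_fun (\<lambda>x y z. z)" by (rule poly3_z)
  have pc: "poly3_fun (\<lambda>x y z. a)" for a by (rule poly3_const)
  have pG: "poly3_fun (\<lambda>x y z. G x y)"
  proof -
    have "poly3_fun (\<lambda>x y z. y ^ (2*q-1) * x ^ (2*n+1) * (2 * x^n * y^q - 3))"
      by (rule poly3_mult poly3_pow poly3_diff px py pc)+
    then show ?thesis unfolding G_def .
  qed
  have pF: "poly3_fun F" unfolding F_def
    by (rule poly3_add poly3_diff poly3_mult poly3_pow px py pz pc)+
  have pP3: "poly3_fun P3" unfolding P3_def by (rule poly3_add pz pG)+
  have pQ1: "poly3_fun Q1" unfolding Q1_def by (rule poly3_diff poly3_mult px py pz)+
  have pGc: "poly3_fun (\<lambda>x y z. G (x - y*z) y)"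
    using poly3_comp[OF pG, of "\<lambda>a b c. a - b*c" "\<lambda>a b c. b" "\<lambda>a b c. c"] pQ1 py pz
    unfolding Q1_def by simp
  have pQ3: "poly3_fun Q3" unfolding Q3_def by (rule poly3_diff pz pGc)+
  have inv1: "Q1 (F x y z) y (P3 x y z) = x \<and> y = y \<and> Q3 (F x y z) y (P3 x y z) = z" for x y z
  proof -
    have 1: "Q1 (F x y z) y (P3 x y z) = x" unfolding Q1_def key by simp
    moreover have "Q3 (F x y z) y (P3 x y z) = z"
      using 1 unfolding Q3_def Q1_def P3_def by simp
    ultimately show ?thesis by simp
  qed
  have inv2: "F (Q1 a b c) b (Q3 a b c) = a \<and> b = b \<and> P3 (Q1 a b c) b (Q3 a b c) = c" for a b c
  proof -
    have 2: "P3 (Q1 a b c) b (Q3 a b c) = c" unfolding Q3_def Q1_def P3_def by simp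
    moreover have "F (Q1 a b c) b (Q3 a b c) = a"
      unfolding key 2 by (simp add: Q1_def)
    ultimately show ?thesis by simp
  qed
  have "poly_automorphism3 F (\<lambda>x y z. y) P3"
    unfolding poly_automorphism3_def
    using pF py pP3 pQ1 pQ3 inv1 inv2 by blast
  then show ?thesis unfolding F_def by blast
qed

end
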